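(* Let $(X,\mathcal{B},\mu)$ and $(Y,\mathcal{F},\nu)$ be measure spaces with non-trivial $\sigma$-finite measures $\mu,\nu$, and let $T\subset \mathbb{R}_+=[0,\infty)$. Let $f:X\times T\to\mathbb{R}$ and $u:Y\times T\to\mathbb{R}$ be functions such that for every $t\in T$ the functions $f(\cdot,t)$ and $u(\cdot,t)$ are measurable, and (for instance) $u=Q[f]$ for some (not necessarily linear) operator $Q$. For $t\in T$ write $$\|f\|_q(t)=\Big(\int_X |f(x,t)|^q\,\mu(dx)\Big)^{1/q},\qquad \|u\|_p(t)=\Big(\int_Y |u(y,t)|^p\,\nu(dy)\Big)^{1/p}.$$ Let $1\le a<b\le\infty$ and $1\le c<d\le\infty$, and suppose there is a constant $C=C(a,b,c,d)\ge 0$ such that $$\|u\|_p(t)\le C\, t^{1/p-1/q}\,\|f\|_q(t)\qquad\text{for all } t\in T,\ q\in(a,b),\ p\in(c,d).$$ Let $\psi\in G\Psi(a,b)$ and $\chi\in G\Psi(c,d)$, and suppose that for every $t\in T$, $\|f(\cdot,t)\|_{G\psi}<\infty$ (Grand Lebesgue norm over $(X,\mu)$) and $\|u(\cdot,t)\|_{G\chi}<\infty$ (Grand Lebesgue norm over $(Y,\nu)$). Then for every $t\in T$, $$\phi[G\psi](t)\cdot \|u(\cdot,t)\|_{G\chi}\le C(a,b,c,d)\,\phi[G\chi](t)\cdot\|f(\cdot,t)\|_{G\psi},$$ equivalently (when the fundamental functions are positive and finite) $$\frac{\|u(\cdot,t)\|_{G\chi}}{\phi[G\chi](t)}\le C(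a,b,c,d)\,\frac{\|f(\cdot,t)\|_{G\psi}}{\phi[G\psi](t)}.$$
   Context: For $1\le a<b\le\infty$, $G\Psi(a,b)$ denotes the set of strictly positive measurable functions $\psi:(a,b)\to(0,\infty)$ (not necessarily finite at the endpoints) with $\inf_{p\in(a,b)}\psi(p)>0$; $(a,b)$ is called the domain $\mathrm{Dom}(\psi)$. For a measure space $(\Omega,\mu)$ and $\psi\in G\Psi(a,b)$, the Grand Lebesgue Space $G\psi$ consists of measurable $g:\Omega\to\mathbb{R}$ with finite norm $\|g\|_{G\psi}=\sup_{p\in(a,b)}\|g\|_p/\psi(p)$, where $\|g\|_p=(\int_\Omega|g|^p\,d\mu)^{1/p}$. The fundamental function of $G\psi$ is $\phi[G\psi](\delta)=\sup_{p\in\mathrm{Dom}(\psi)}\delta^{1/p}/\psi(p)$ for $\delta\ge0$. (The paper denotes the generating function on $(c,d)$ by $\nu$, the same letter as the measure on $Y$; here it is renamed $\chi$.) *)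

theory Defs
  imports "HOL-Analysis.Analysis" "HOL-Probability.Probability"
begin

definition gdom :: "real \<Rightarrow> ereal \<Rightarrow> real set" where
  "gdom a b = {p. ereal a < ereal p \<and> ereal p < b}"

definition GPsi :: "real \<Rightarrow> ereal \<Rightarrow> (real \<Rightarrow> real) \<Rightarrow> bool" where
  "GPsi a b \<psi> \<longleftrightarrow>
     \<psi> \<in> borel_measurable (restrict_space borel (gdom a b)) \<and>
     (\<forall>p\<in>gdom a b. 0 < \<psi> p) \<and>
     (INF p\<in>gdom a b. \<psi> p) > 0"

definition lp_norm :: "'a measure \<Rightarrow> ('a \<Rightarrow> real) \<Rightarrow> real \<Rightarrow> ennreal" where
  "lp_norm M g p =
     (let I = (\<integral>\<^sup>+ x. ennreal (\<bar>g x\<bar> powr p) \<partial>M)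
      in if I = \<infinity> then \<infinity> else ennreal (enn2real I powr (1 / p)))"

definition gls_norm :: "'a measure \<Rightarrow> real \<Rightarrow> ereal \<Rightarrow> (real \<Rightarrow> real) \<Rightarrow> ('a \<Rightarrow> real) \<Rightarrow> ennreal" where
  "gls_norm M a b \<psi> g = (SUP p\<in>gdom a b. lp_norm M g p / ennreal (\<psi> p))"

definition fund_fun :: "real \<Rightarrow> ereal \<Rightarrow> (real \<Rightarrow> real) \<Rightarrow> real \<Rightarrow> ennreal" where
  "fund_fun a b \<psi> \<delta> = (SUP p\<in>gdom a b. ennreal (\<delta> powr (1 / p) / \<psi> p))"

end

theory Submission
  imports Defs
begin

lemma sup_prod_le:
  fixes f g :: "'i \<Rightarrow> ennreal"
  assumes "\<And>i j. i \<in> I \<Longrightarrow> j \<in> J \<Longrightarrow> f i * g j \<le> Z"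
  shows "(SUP i\<in>I. f i) * (SUP j\<in>J. g j) \<le> Z"
proof -
  have "(SUP i\<in>I. f i) * (SUP j\<in>J. g j) = (SUP i\<in>I. SUP j\<in>J. f i * g j)"
    by (subst SUP_mult_right_ennreal, subst SUP_mult_left_ennreal) (rule refl)
  also have "\<dots> \<le> Z" using assms by (intro SUP_least) auto
  finally show ?thesis .
qed

lemma core:
  fixes U F \<Phi> :: ennreal and r s A B C :: real
  assumes r: "r > 0" and s: "s > 0" and A: "A > 0" and B: "B \<ge> 0" and C: "C \<ge> 0"
    and hU: "U \<le> ennreal C * ennreal (B / A) * F"
    and hP: "ennreal (B / r) \<le> \<Phi>"
  shows "ennreal (A / s) * (U / ennreal r) \<le> ennreal C * \<Phi> * (F / ennreal s)"
proof -
  have "ennreal (A / s) * (U / ennreal r) = ennreal (A / s) * U * ennreal (1 / r)"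
    using r by (simp add: divide_ennreal_def inverse_ennreal inverse_eq_divide mult.assoc)
  also have "\<dots> \<le> ennreal (A / s) * (ennreal C * ennreal (B / A) * F) * ennreal (1 / r)"
    by (intro mult_right_mono mult_left_mono hU) auto
  also have "\<dots> = ennreal C * (ennreal (A / s) * ennreal (B / A) * ennreal (1 / r)) * F"
    by (simp add: ac_simps)
  also have "ennreal (A / s) * ennreal (B / A) * ennreal (1 / r) = ennreal (B / r) * ennreal (1 / s)"
  proof -
    have "ennreal (A / s) * ennreal (B / A) * ennreal (1 / r) = ennreal (A / s * (B / A) * (1 / r))"
      using A B r s by (simp only: ennreal_mult divide_nonneg_nonneg mult_nonneg_nonneg less_imp_le zero_le_one)
    also have "A / s * (B / A) * (1 / r) = B / r * (1 / s)" using A by (simp add: field_simps)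
    also have "ennreal \<dots> = ennreal (B / r) * ennreal (1 / s)"
      using B r s by (intro ennreal_mult) auto
    finally show ?thesis .
  qed
  also have "ennreal C * (ennreal (B / r) * ennreal (1 / s)) * F \<le> ennreal C * (\<Phi> * ennreal (1 / s)) * F"
    by (intro mult_right_mono mult_left_mono hP) auto
  also have "\<dots> = ennreal C * \<Phi> * (F / ennreal s)"
    using s by (simp add: divide_ennreal_def inverse_ennreal inverse_eq_divide ac_simps)
  finally show ?thesis .
qed

theorem proposition2p1:
  fixes M :: "'x measure" and N :: "'y measure"
    and T :: "real set"
    and f :: "'x \<Rightarrow> real \<Rightarrow> real" and u :: "'y \<Rightarrow> real \<Rightarrow> real"
    and a c :: real and b d :: ereal and C :: real
    and \<psi> chi :: "real \<Rightarrow> real"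
  assumes "sigma_finite_measure M" and "sigma_finite_measure N"
    and "emeasure M (space M) > 0" and "emeasure N (space N) > 0"
    and "T \<subseteq> {0..}"
    and "\<And>t. t \<in> T \<Longrightarrow> (\<lambda>x. f x t) \<in> borel_measurable M"
    and "\<And>t. t \<in> T \<Longrightarrow> (\<lambda>y. u y t) \<in> borel_measurable N"
    and "1 \<le> a" and "ereal a < b" and "1 \<le> c" and "ereal c < d"
    and "C \<ge> 0"
    and bound: "\<And>t q p. t \<in> T \<Longrightarrow> q \<in> gdom a b \<Longrightarrow> p \<in> gdom c d \<Longrightarrow>
        lp_norm N (\<lambda>y. u y t) p
          \<le> ennreal C * ennreal (t powr (1 / p - 1 / q)) * lp_norm M (\<lambda>x. f x t) q"
    and "GPsi a b \<psi>" and "GPsi c d chi"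
    and "\<And>t. t \<in> T \<Longrightarrow> gls_norm M a b \<psi> (\<lambda>x. f x t) < \<infinity>"
    and "\<And>t. t \<in> T \<Longrightarrow> gls_norm N c d chi (\<lambda>y. u y t) < \<infinity>"
  shows "\<forall>t\<in>T. fund_fun a b \<psi> t * gls_norm N c d chi (\<lambda>y. u y t)
            \<le> ennreal C * fund_fun c d chi t * gls_norm M a b \<psi> (\<lambda>x. f x t)"
proof
  fix t assume tT: "t \<in> T"
  have psipos: "\<And>q. q \<in> gdom a b \<Longrightarrow> \<psi> q > 0" using \<open>GPsi a b \<psi>\<close> by (simp add: GPsi_def)
  have chipos: "\<And>p. p \<in> gdom c d \<Longrightarrow> chi p > 0" using \<open>GPsi c d chi\<close> by (simp add: GPsi_def)
  have qpos: "\<And>q. q \<in> gdom a b \<Longrightarrow> q > 0" using \<open>1 \<le> a\<close> by (auto simp: gdom_def)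
  show "fund_fun a b \<psi> t * gls_norm N c d chi (\<lambda>y. u y t)
            \<le> ennreal C * fund_fun c d chi t * gls_norm M a b \<psi> (\<lambda>x. f x t)"
  proof (cases "t = 0")
    case True
    have z: "\<And>I. (SUP x\<in>I. (0::ennreal)) = 0" by (case_tac "I = {}") (auto simp: bot_ennreal)
    from True show ?thesis by (simp add: fund_fun_def z)
  next
    case False
    with tT \<open>T \<subseteq> {0..}\<close> have t: "t > 0" by force
    show ?thesis unfolding fund_fun_def gls_norm_def
    proof (rule sup_prod_le)
      fix q p assume q: "q \<in> gdom a b" and p: "p \<in> gdom c d"
      have "ennreal (t powr (1/q) / \<psi> q) * (lp_norm N (\<lambda>y. u y t) p / ennreal (chi p))
          \<le> ennreal C * (SUP p\<in>gdom c d. ennreal (t powr (1 / p) / chi p)) * (lp_norm M (\<lambda>x. f x t) q / ennreal (\<psi> q))"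
      proof (rule core[where B = "t powr (1/p)"])
        show "lp_norm N (\<lambda>y. u y t) p \<le> ennreal C * ennreal (t powr (1 / p) / t powr (1 / q)) * lp_norm M (\<lambda>x. f x t) q"
          using bound[OF tT q p] t by (simp add: powr_diff)
        show "ennreal (t powr (1 / p) / chi p) \<le> (SUP p\<in>gdom c d. ennreal (t powr (1 / p) / chi p))"
          using p by (rule SUP_upper)
      qed (use psipos[OF q] chipos[OF p] t \<open>C \<ge> 0\<close> in auto)
      also have "\<dots> \<le> ennreal C * (SUP p\<in>gdom c d. ennreal (t powr (1 / p) / chi p)) * (SUP q\<in>gdom a b. lp_norm M (\<lambda>x. f x t) q / ennreal (\<psi> q))"
        by (intro mult_left_mono SUP_upper q) auto
      finally show "ennreal (t powr (1/q) / \<psi> q) * (lp_norm N (\<lambda>y. u y t) p / ennreal (chi p))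
          \<le> ennreal C * (SUP p\<in>gdom c d. ennreal (t powr (1 / p) / chi p)) * (SUP q\<in>gdom a b. lp_norm M (\<lambda>x. f x t) q / ennreal (\<psi> q))" .
    qed
  qed
qed

end
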